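(* Let $(\delta_t)_{t\ge1}$ be a sequence of nonnegative reals, let $\kappa>0$, $\omega\ge0$, $\sigma>0$ and $\epsilon_t=\sigma/t^2$. If $$\delta_{t+1}\le\delta_t-\kappa\delta_t^2+\omega\epsilon_t\quad\text{for all }t\ge1,$$ then for all $t\ge1$, $\delta_t\le C/t$, where $$C:=\frac{4}{\kappa}\Big(1+\sqrt{2\omega\sigma\kappa(\omega\sigma\kappa+1)}\Big)+4\max\Big\{\delta_1,\frac{4}{\kappa}\Big\}.$$ *)

theory Defs
  imports Complex_Main
begin

end

theory Submission imports Defs begin

lemma gmono:
  fixes k x u :: real
  assumes "k > 0" "0 \<le> x" "x \<le> u" "u \<le> 1/(2*k)"
  shows "x - k*x^2 \<le> u - k*u^2"
proof -
  have "k*(u*2) \<le> 1" using assms by (simp add: field_simps)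
  moreover have "k*x \<le> k*u" using assms by simp
  ultimately have "k*(x+u) \<le> 1" by (simp add: algebra_simps)
  hence "(u - x)*(1 - k*(x+u)) \<ge> 0" using assms by simp
  thus ?thesis by (simp add: algebra_simps power2_eq_square)
qed

lemma gmax:
  fixes k x :: real
  assumes "k > 0"
  shows "x - k*x^2 \<le> 1/(4*k)"
proof -
  have "k*(x - 1/(2*k))^2 \<ge> 0" using assms by simp
  moreover have "k*(x - 1/(2*k))^2 = k*x^2 - x + 1/(4*k)" using assms
    by (simp add: power2_eq_square field_simps)
  ultimately show ?thesis by linarith
qed

lemma step:
  fixes k a C x y t :: real
  assumes k: "k > 0" and a: "a \<ge> 0" and C1: "C \<ge> 16/k" and C2: "C \<ge> 4*a"
    and C3: "k*C^2 \<ge> 32*a" and t: "t \<ge> 2" and x: "0 \<le> x" "x \<le> C/t"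
    and y: "y \<le> x - k*x^2 + a/t^2"
  shows "y \<le> C/(t+1)"
proof (cases "C/t \<le> 1/(2*k)")
  case True
  have "x - k*x^2 \<le> C/t - k*(C/t)^2" using gmono[OF k x True] .
  hence "y \<le> C/t - k*(C/t)^2 + a/t^2" using y by linarith
  also have "\<dots> = (C*t - (k*C^2 - a))/t^2" using t by (simp add: field_simps power2_eq_square)
  also have "\<dots> \<le> (C*t - C)/t^2"
  proof -
    have "16 \<le> C*k" using C1 k by (simp add: field_simps)
    moreover have "C \<ge> 0" using C1 k by (smt (verit) divide_pos_pos)
    ultimately have "C*16 \<le> C*(C*k)" by (simp add: mult_left_mono)
    hence "k*C^2 \<ge> 16*C" by (simp add: algebra_simps power2_eq_square)
    hence "k*C^2 - a \<ge> C" using C3 a by linarith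
    thus ?thesis using t by (simp add: divide_right_mono)
  qed
  also have "\<dots> \<le> C/(t+1)"
  proof -
    have Cp: "C \<ge> 0" using C1 k by (smt (verit) divide_pos_pos)
    have "(C*t - C)*(t+1) \<le> C*t^2" using Cp by (simp add: algebra_simps power2_eq_square)
    thus ?thesis using t by (simp add: field_simps)
  qed
  finally show ?thesis .
next
  case False
  have Cp0: "C \<ge> 0" using C1 k by (smt (verit) divide_pos_pos)
  have tl: "t < 2*k*C" using False t k by (simp add: field_simps)
  have "y \<le> 1/(4*k) + a/t^2" using gmax[OF k, of x] y by linarith
  also have "\<dots> \<le> C/(t+1)"
  proof -
    have "a*(t+1) \<le> 3/4*a*t^2"
    proof -
      have "2*t \<le> t*t" using t by (simp add: mult_right_mono)
      hence "t+1 \<le> 3/4*t^2" using t unfolding power2_eq_square by linarith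
      thus ?thesis using a by (metis mult.assoc mult_left_mono mult.commute)
    qed
    hence "a/t^2*(t+1) \<le> 3/4*a" using t by (simp add: field_simps)
    moreover have "(t+1)/(4*k) \<le> C/2 + 1/(4*k)" using tl k by (simp add: field_simps)
    moreover have "1/(4*k) \<le> C/4" using C1 k by (simp add: field_simps)
    moreover have "(1/(4*k) + a/t^2)*(t+1) = (t+1)/(4*k) + a/t^2*(t+1)" by (simp add: algebra_simps)
    ultimately have "(1/(4*k) + a/t^2)*(t+1) \<le> C" using C2 Cp0 by linarith
    thus ?thesis using t by (simp add: field_simps)
  qed
  finally show ?thesis .
qed
theorem lemma11:
  fixes \<delta> :: "nat \<Rightarrow> real" and \<kappa> \<omega> \<sigma> :: real and \<epsilon> :: "nat \<Rightarrow> real"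
  assumes nonneg: "\<And>t. t \<ge> 1 \<Longrightarrow> \<delta> t \<ge> 0"
    and \<kappa>_pos: "\<kappa> > 0" and \<omega>_nonneg: "\<omega> \<ge> 0" and \<sigma>_pos: "\<sigma> > 0"
    and \<epsilon>_def: "\<And>t. t \<ge> 1 \<Longrightarrow> \<epsilon> t = \<sigma> / (real t)^2"
    and rec: "\<And>t. t \<ge> 1 \<Longrightarrow> \<delta> (t + 1) \<le> \<delta> t - \<kappa> * (\<delta> t)^2 + \<omega> * \<epsilon> t"
  shows "\<forall>t \<ge> 1. \<delta> t \<le>
    ((4 / \<kappa>) * (1 + sqrt (2 * \<omega> * \<sigma> * \<kappa> * (\<omega> * \<sigma> * \<kappa> + 1)))
      + 4 * max (\<delta> 1) (4 / \<kappa>)) / real t"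
proof -
  define a where "a = \<omega> * \<sigma>"
  define s where "s = sqrt (2 * \<omega> * \<sigma> * \<kappa> * (\<omega> * \<sigma> * \<kappa> + 1))"
  define C where "C = ((4 / \<kappa>) * (1 + s) + 4 * max (\<delta> 1) (4 / \<kappa>))"
  have a0: "a \<ge> 0" unfolding a_def using \<omega>_nonneg \<sigma>_pos by simp
  have arg: "2 * \<omega> * \<sigma> * \<kappa> * (\<omega> * \<sigma> * \<kappa> + 1) = 2*(a*\<kappa>)*(a*\<kappa>+1)"
    unfolding a_def by (simp add: algebra_simps)
  have ak: "a*\<kappa> \<ge> 0" using a0 \<kappa>_pos by simp
  have argnn: "2*(a*\<kappa>)*(a*\<kappa>+1) \<ge> 0" using ak by simp
  have s0: "s \<ge> 0" unfolding s_def arg using argnn by simp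
  have s2: "s^2 = 2*(a*\<kappa>)*(a*\<kappa>+1)" unfolding s_def arg by (rule real_sqrt_pow2[OF argnn])
  have sak: "s \<ge> a*\<kappa>"
  proof -
    have hx: "\<And>x::real. x \<ge> 0 \<Longrightarrow> x^2 \<le> 2*x*(x+1)"
    proof -
      fix x :: real assume "x \<ge> 0"
      hence "x*x \<ge> 0" by simp
      moreover have "2*x*(x+1) = x*x + x*x + 2*x" by (simp add: algebra_simps)
      ultimately show "x^2 \<le> 2*x*(x+1)" using \<open>x \<ge> 0\<close> unfolding power2_eq_square by linarith
    qed
    have "(a*\<kappa>)^2 \<le> s^2" unfolding s2 by (rule hx[OF ak])
    thus ?thesis using s0 by (rule power2_le_imp_le)
  qed
  have s2a: "s^2 \<ge> 2*(a*\<kappa>)"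
  proof -
    have "2*(a*\<kappa>)*1 \<le> 2*(a*\<kappa>)*(a*\<kappa>+1)" using ak by (intro mult_left_mono) auto
    thus ?thesis unfolding s2 by simp
  qed
  have d1: "\<delta> 1 \<ge> 0" using nonneg by simp
  have m1: "max (\<delta> 1) (4/\<kappa>) \<ge> 4/\<kappa>" "max (\<delta> 1) (4/\<kappa>) \<ge> \<delta> 1" by auto
  have ks: "4/\<kappa>*(1+s) \<ge> 4*a"
  proof -
    have "4/\<kappa>*(1+s) \<ge> 4/\<kappa>*(a*\<kappa>)" using sak \<kappa>_pos by (intro mult_left_mono) auto
    thus ?thesis using \<kappa>_pos by simp
  qed
  have ks0: "4/\<kappa>*(1+s) \<ge> 4/\<kappa>*s" using \<kappa>_pos by (intro mult_left_mono) auto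
  have k4: "4/\<kappa> > 0" using \<kappa>_pos by simp
  have k16: "16/\<kappa> = 4*(4/\<kappa>)" by simp
  have ks1: "4/\<kappa>*(1+s) \<ge> 0" using k4 s0 by simp
  have Ck: "C \<ge> 4/\<kappa>*s" unfolding C_def using ks0 m1 k4 by linarith
  have C1: "C \<ge> 16/\<kappa>" unfolding C_def k16 using m1 ks1 by linarith
  have C2: "C \<ge> 4*a + 4*\<delta> 1" unfolding C_def using m1 ks by linarith
  have C3: "\<kappa>*C^2 \<ge> 32*a"
  proof -
    have "(4/\<kappa>*s)^2 \<le> C^2" using Ck s0 \<kappa>_pos by (intro power_mono) auto
    hence "\<kappa>*(4/\<kappa>*s)^2 \<le> \<kappa>*C^2" using \<kappa>_pos by simp
    moreover have "\<kappa>*(4/\<kappa>*s)^2 = 16*s^2/\<kappa>" using \<kappa>_pos by (simp add: power2_eq_square field_simps)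
    moreover have "16*s^2/\<kappa> \<ge> 32*a"
    proof -
      have "16*s^2 \<ge> 32*a*\<kappa>" using s2a by (simp add: mult.commute)
      thus ?thesis using \<kappa>_pos by (simp add: field_simps)
    qed
    ultimately show ?thesis by linarith
  qed
  have main: "\<delta> (Suc n) \<le> C / real (Suc n)" for n
  proof (induction n)
    case 0
    then show ?case using C2 a0 d1 by simp
  next
    case (Suc n)
    have r: "\<delta> (Suc n + 1) \<le> \<delta> (Suc n) - \<kappa> * (\<delta> (Suc n))^2 + a / (real (Suc n))^2"
      using rec[of "Suc n"] \<epsilon>_def[of "Suc n"] unfolding a_def by simp
    show ?case
    proof (cases n)
      case 0
      have "\<kappa> * (\<delta> 1)^2 \<ge> 0" using \<kappa>_pos by simp
      hence "\<delta> 2 \<le> \<delta> 1 + a" using r 0 by (simp add: numeral_2_eq_2)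
      thus ?thesis using 0 C2 a0 d1 by (simp add: numeral_2_eq_2)
    next
      case (Suc m)
      have "real (Suc n) \<ge> 2" using Suc by simp
      from step[OF \<kappa>_pos a0 C1 _ C3 this nonneg[of "Suc n"] Suc.IH r] C2 a0 d1
      show ?thesis by (simp add: add.commute)
    qed
  qed
  show ?thesis
  proof (intro allI impI)
    fix t :: nat assume "t \<ge> 1"
    then obtain n where "t = Suc n" by (cases t) auto
    thus "\<delta> t \<le> ((4 / \<kappa>) * (1 + sqrt (2 * \<omega> * \<sigma> * \<kappa> * (\<omega> * \<sigma> * \<kappa> + 1)))
      + 4 * max (\<delta> 1) (4 / \<kappa>)) / real t" using main[of n] unfolding C_def s_def by simp
  qed
qed

end
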